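(* In the setting described in the context, let $d\in\mathcal{B}_2$ be a metric on $A$. Then the function $$\sigma(x,y)=d(x,\cdot)+d(y,\cdot)-d(x,y)-d(\cdot,\cdot)+m$$ is a $\Sigma_m$-proximity on $A$.
   Context: $A$ is a nonempty set (possibly infinite); $m\in\mathbb{R}$. A metric on $A$ is a function $d:A^2\to\mathbb{R}$ such that for all $x,y,z\in A$: $d(x,y)=0$ iff $x=y$, and $d(x,y)+d(x,z)-d(y,z)\ge0$ (metrics are symmetric). $\mathcal{B}_1$ is a set of functions $A\to\mathbb{R}$ forming a real linear space containing all constant functions, and $\mu:\mathcal{B}_1\to\mathbb{R}$ is a linear functional with $\mu(c)=c$ for every constant function $c$ and monotone: if $f,g\in\mathcal{B}_1$ and $f\ge g$ pointwise, then $\mu(f)\ge\mu(g)$. For $f:A^2\to\mathbb{R}$ such that $y\mapsto f(x,y)$ lies in $\mathcal{B}_1$ for every $x$, write $f(x,\cdot)=\mu(y\mapsto f(x,y))$, a function of $x$. $\mathcal{B}_2$ is a set of functions $A^2\to\mathbb{R}$ forming a real linear space that contains all constant functions and all functions $(x,y)\mapsto h(x)$ and $(x,y)\mapsto h(y)$ with $h\in\mathcal{B}_1$, and such that for every $f\in\mathcal{B}_2$: $y\mapsto f(x,y)\in\mathcal{B}_1$ for every $x$, $x\mapsto f(x,\cdot)\in\mathcal{B}_1$, and $x\mapsto f(x,x)\in\mathcal{B}_1$. For a symmetric $d\in\mathcal{B}_2$, $d(\cdot,\cdot)=\mu(x\mapsto d(x,\cdot))$ (a real number). A function $\sigma\in\mathcal{B}_2$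 is a $\Sigma_m$-proximity on $A$ if for all $x,y,z\in A$: (1) $\sigma(x,\cdot)=m$; (2) $\sigma(x,y)+\sigma(x,z)-\sigma(y,z)\le\sigma(x,x)$, with strict inequality whenever $z=y$ and $x\ne y$. *)

theory Defs
  imports Complex_Main
begin

text \<open>The set A is modelled by the (nonempty) type 'a.\<close>

definition metric_fun :: "('a \<Rightarrow> 'a \<Rightarrow> real) \<Rightarrow> bool" where
  "metric_fun d \<longleftrightarrow> (\<forall>x y. d x y = 0 \<longleftrightarrow> x = y) \<and>
     (\<forall>x y z. d x y + d x z - d y z \<ge> 0)"

definition lin_space :: "('b \<Rightarrow> real) set \<Rightarrow> bool" where
  "lin_space V \<longleftrightarrow> (\<forall>f\<in>V. \<forall>g\<in>V. (\<lambda>x. f x + g x) \<in> V) \<and>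
     (\<forall>f\<in>V. \<forall>c::real. (\<lambda>x. c * f x) \<in> V)"

definition B1_space :: "('a \<Rightarrow> real) set \<Rightarrow> bool" where
  "B1_space B1 \<longleftrightarrow> lin_space B1 \<and> (\<forall>c::real. (\<lambda>_. c) \<in> B1)"

definition mean_functional :: "('a \<Rightarrow> real) set \<Rightarrow> (('a \<Rightarrow> real) \<Rightarrow> real) \<Rightarrow> bool" where
  "mean_functional B1 \<mu> \<longleftrightarrow>
     (\<forall>f\<in>B1. \<forall>g\<in>B1. \<mu> (\<lambda>x. f x + g x) = \<mu> f + \<mu> g) \<and>
     (\<forall>f\<in>B1. \<forall>c. \<mu> (\<lambda>x. c * f x) = c * \<mu> f) \<and>
     (\<forall>c. \<mu> (\<lambda>_. c) = c) \<and>
     (\<forall>f\<in>B1. \<forall>g\<in>B1. (\<forall>x. f x \<ge> g x) \<longrightarrow> \<mu> f \<ge> \<mu> g)"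

definition pmean :: "(('a \<Rightarrow> real) \<Rightarrow> real) \<Rightarrow> ('a \<Rightarrow> 'a \<Rightarrow> real) \<Rightarrow> 'a \<Rightarrow> real" where
  "pmean \<mu> f x = \<mu> (\<lambda>y. f x y)"

definition tmean :: "(('a \<Rightarrow> real) \<Rightarrow> real) \<Rightarrow> ('a \<Rightarrow> 'a \<Rightarrow> real) \<Rightarrow> real" where
  "tmean \<mu> f = \<mu> (\<lambda>x. pmean \<mu> f x)"

definition B2_space :: "('a \<Rightarrow> real) set \<Rightarrow> (('a \<Rightarrow> real) \<Rightarrow> real) \<Rightarrow> ('a \<Rightarrow> 'a \<Rightarrow> real) set \<Rightarrow> bool" where
  "B2_space B1 \<mu> B2 \<longleftrightarrow>
     (\<forall>f\<in>B2. \<forall>g\<in>B2. (\<lambda>x y. f x y + g x y) \<in> B2) \<and>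
     (\<forall>f\<in>B2. \<forall>c::real. (\<lambda>x y. c * f x y) \<in> B2) \<and>
     (\<forall>c::real. (\<lambda>_ _. c) \<in> B2) \<and>
     (\<forall>h\<in>B1. (\<lambda>x y. h x) \<in> B2 \<and> (\<lambda>x y. h y) \<in> B2) \<and>
     (\<forall>f\<in>B2. (\<forall>x. (\<lambda>y. f x y) \<in> B1) \<and> (\<lambda>x. pmean \<mu> f x) \<in> B1 \<and> (\<lambda>x. f x x) \<in> B1)"

definition sigma_proximity ::
  "(('a \<Rightarrow> real) \<Rightarrow> real) \<Rightarrow> ('a \<Rightarrow> 'a \<Rightarrow> real) set \<Rightarrow> real \<Rightarrow> ('a \<Rightarrow> 'a \<Rightarrow> real) \<Rightarrow> bool" where
  "sigma_proximity \<mu> B2 m \<sigma> \<longleftrightarrow> \<sigma> \<in> B2 \<and>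
     (\<forall>x. pmean \<mu> \<sigma> x = m) \<and>
     (\<forall>x y z. \<sigma> x y + \<sigma> x z - \<sigma> y z \<le> \<sigma> x x) \<and>
     (\<forall>x y. x \<noteq> y \<longrightarrow> \<sigma> x y + \<sigma> x y - \<sigma> y y < \<sigma> x x)"

end

theory Submission
  imports Defs
begin

theorem proposition2:
  fixes B1 :: "('a \<Rightarrow> real) set" and \<mu> :: "('a \<Rightarrow> real) \<Rightarrow> real"
    and B2 :: "('a \<Rightarrow> 'a \<Rightarrow> real) set" and d :: "'a \<Rightarrow> 'a \<Rightarrow> real" and m :: real
  assumes "B1_space B1" and "mean_functional B1 \<mu>" and "B2_space B1 \<mu> B2"
    and "d \<in> B2" and "metric_fun d"
  shows "sigma_proximity \<mu> B2 m
           (\<lambda>x y. pmean \<mu> d x + pmean \<mu> d y - d x y - tmean \<mu> d + m)"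
proof -
  let ?p = "\<lambda>x. pmean \<mu> d x"
  let ?T = "tmean \<mu> d"
  have dxx: "\<And>x. d x x = 0" using assms(5) unfolding metric_fun_def by auto
  have tri: "\<And>x y z. d x y + d x z - d y z \<ge> 0" using assms(5) unfolding metric_fun_def by auto
  have pos: "\<And>x y. x \<noteq> y \<Longrightarrow> d x y > 0"
  proof -
    fix x y :: 'a assume "x \<noteq> y"
    hence "d x y \<noteq> 0" using assms(5) unfolding metric_fun_def by auto
    moreover have "d x y + d x y - d y y \<ge> 0" by (rule tri)
    ultimately show "d x y > 0" using dxx by (smt (verit))
  qed
  have B1add: "\<And>f g. f \<in> B1 \<Longrightarrow> g \<in> B1 \<Longrightarrow> (\<lambda>x. f x + g x) \<in> B1"
    using assms(1) unfolding B1_space_def lin_space_def by auto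
  have B1mul: "\<And>f c. f \<in> B1 \<Longrightarrow> (\<lambda>x. c * f x) \<in> B1"
    using assms(1) unfolding B1_space_def lin_space_def by auto
  have B1c: "\<And>c. (\<lambda>_. c) \<in> B1"
    using assms(1) unfolding B1_space_def by auto
  have madd: "\<And>f g. f \<in> B1 \<Longrightarrow> g \<in> B1 \<Longrightarrow> \<mu> (\<lambda>x. f x + g x) = \<mu> f + \<mu> g"
    using assms(2) unfolding mean_functional_def by auto
  have mmul: "\<And>f c. f \<in> B1 \<Longrightarrow> \<mu> (\<lambda>x. c * f x) = c * \<mu> f"
    using assms(2) unfolding mean_functional_def by auto
  have mc: "\<And>c. \<mu> (\<lambda>_. c) = c"
    using assms(2) unfolding mean_functional_def by auto
  have pB1: "?p \<in> B1" and dB1: "\<And>x. d x \<in> B1"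
    using assms(3,4) unfolding B2_space_def by auto
  have B2add: "\<And>f g. f \<in> B2 \<Longrightarrow> g \<in> B2 \<Longrightarrow> (\<lambda>x y. f x y + g x y) \<in> B2"
    and B2mul: "\<And>f c. f \<in> B2 \<Longrightarrow> (\<lambda>x y. c * f x y) \<in> B2"
    and B2c: "\<And>c. (\<lambda>_ _. c) \<in> B2"
    and B2h: "\<And>h. h \<in> B1 \<Longrightarrow> (\<lambda>x y. h x) \<in> B2 \<and> (\<lambda>x y. h y) \<in> B2"
    using assms(3) unfolding B2_space_def by auto
  have s1: "(\<lambda>x y. ?p x + ?p y) \<in> B2" using B2add B2h pB1 by blast
  have s2: "(\<lambda>x y. (-1) * d x y) \<in> B2" using B2mul assms(4) by blast
  have s3: "(\<lambda>x y. (?p x + ?p y) + (-1) * d x y) \<in> B2"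
    using B2add[OF s1 s2] by simp
  have s4: "(\<lambda>x y. ((?p x + ?p y) + (-1) * d x y) + (m - ?T)) \<in> B2"
    using B2add[OF s3 B2c] by simp
  have inB2: "(\<lambda>x y. ?p x + ?p y - d x y - ?T + m) \<in> B2"
  proof -
    have "(\<lambda>x y. ?p x + ?p y - d x y - ?T + m) = (\<lambda>x y. ((?p x + ?p y) + (-1) * d x y) + (m - ?T))"
      by (intro ext) simp
    thus ?thesis using s4 by simp
  qed
  have mean: "pmean \<mu> (\<lambda>x y. ?p x + ?p y - d x y - ?T + m) x = m" for x
  proof -
    have f1: "(\<lambda>y. (-1) * d x y) \<in> B1" using B1mul dB1 by blast
    have f2: "(\<lambda>y. ?p y + (-1) * d x y) \<in> B1" using B1add[OF pB1 f1] by simp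
    have "(\<lambda>y. ?p x + ?p y - d x y - ?T + m) = (\<lambda>y. (?p y + (-1) * d x y) + (?p x - ?T + m))"
      by (intro ext) simp
    hence "pmean \<mu> (\<lambda>x y. ?p x + ?p y - d x y - ?T + m) x
        = \<mu> (\<lambda>y. (?p y + (-1) * d x y) + (?p x - ?T + m))" unfolding pmean_def by simp
    also have "\<dots> = \<mu> (\<lambda>y. ?p y + (-1) * d x y) + (?p x - ?T + m)"
      using madd[OF f2 B1c] mc by simp
    also have "\<mu> (\<lambda>y. ?p y + (-1) * d x y) = \<mu> ?p + (-1) * \<mu> (d x)"
      using madd[OF pB1 f1] mmul[where f="d x" and c="-1"] dB1[of x] by simp
    also have "\<mu> ?p = ?T" unfolding tmean_def by simp
    also have "\<mu> (d x) = ?p x" unfolding pmean_def by simp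
    finally show ?thesis by simp
  qed
  show ?thesis unfolding sigma_proximity_def
  proof (intro conjI allI impI)
    show "(\<lambda>x y. ?p x + ?p y - d x y - ?T + m) \<in> B2" by (rule inB2)
  next
    fix x show "pmean \<mu> (\<lambda>x y. ?p x + ?p y - d x y - ?T + m) x = m" by (rule mean)
  next
    fix x y z
    show "?p x + ?p y - d x y - ?T + m + (?p x + ?p z - d x z - ?T + m) - (?p y + ?p z - d y z - ?T + m)
          \<le> ?p x + ?p x - d x x - ?T + m" using tri[of x y z] dxx[of x] by simp
  next
    fix x y :: 'a assume "x \<noteq> y"
    thus "?p x + ?p y - d x y - ?T + m + (?p x + ?p y - d x y - ?T + m) - (?p y + ?p y - d y y - ?T + m)
          < ?p x + ?p x - d x x - ?T + m" using pos[of x y] dxx by simp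
  qed
qed

end
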